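(* Let $t,t'\in B_n$ with $t\neq t'$ and let $G$ be a digraph such that $\mathbb{A}(G)$ satisfies $t\approx t'$. Then $E_G\le L_{t,t'}+1$.
   Context: Digraphs $G=(V,E)$ have $E\subseteq V\times V$, loops allowed, possibly infinite. $\mathbb{A}(G)$ is the groupoid on $V\cup\{\infty\}$ with $xy=x$ if $x,y\in V$, $(x,y)\in E$, and $xy=\infty$ otherwise. $B_n$: binary terms with $x_1,\dots,x_n$ each occurring once in this order; $G(t)$: rooted tree defined by $G(x_i)$ a single vertex and $G(t_1t_2)=G(t_1)\cup G(t_2)$ plus an edge from the leftmost variable of $t_1$ to that of $t_2$; root $x_1$. With $T=G(t)$, $T'=G(t')$ and depth $d_T$: $L_{t,t'}$ is the largest integer $m$ such that for all $x$, if $d_T(x)\le m$ or $d_{T'}(x)\le m$ then $d_T(x)=d_{T'}(x)$. A strongly connected component (SCC) is trivial if it is a single vertex without a loop, nontrivial otherwise. A path $v_0\to\dots\to v_\ell$ is an entryway to a nontrivial SCC $K$ if $v_0,\dots,v_{\ell-1}$ lie in trivial SCCs and $v_\ell\in K$. $E_G$ is the maximal length of an entryway ($\infty$ if unbounded, $-\infty$ if none). *)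

theory Defs
  imports Main "HOL-Library.Extended_Real"
begin

datatype bterm = Var nat | Op bterm bterm

fun leaves :: "bterm \<Rightarrow> nat list" where
  "leaves (Var i) = [i]"
| "leaves (Op a b) = leaves a @ leaves b"

definition Bn :: "nat \<Rightarrow> bterm set" where
  "Bn n = {t. leaves t = [1..<n+1]}"

fun lmv :: "bterm \<Rightarrow> nat" where
  "lmv (Var i) = i"
| "lmv (Op a b) = lmv a"

fun tedges :: "bterm \<Rightarrow> (nat \<times> nat) set" where
  "tedges (Var i) = {}"
| "tedges (Op a b) = tedges a \<union> tedges b \<union> {(lmv a, lmv b)}"

definition tdepth :: "bterm \<Rightarrow> nat \<Rightarrow> nat" where
  "tdepth t x = (LEAST k. (1, x) \<in> (tedges t) ^^ k)"

definition Ltt :: "nat \<Rightarrow> bterm \<Rightarrow> bterm \<Rightarrow> int" where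
  "Ltt n t t' = (GREATEST m :: int. \<forall>x\<in>{1..n}.
      (int (tdepth t x) \<le> m \<or> int (tdepth t' x) \<le> m) \<longrightarrow> tdepth t x = tdepth t' x)"

(* The groupoid A(G) on V \<union> {\<infinity>}; None plays the role of \<infinity> *)
definition gcarrier :: "'a set \<Rightarrow> 'a option set" where
  "gcarrier V = Some ` V \<union> {None}"

fun gmul :: "'a set \<Rightarrow> ('a \<times> 'a) set \<Rightarrow> 'a option \<Rightarrow> 'a option \<Rightarrow> 'a option" where
  "gmul V E (Some x) (Some y) = (if x \<in> V \<and> y \<in> V \<and> (x, y) \<in> E then Some x else None)"
| "gmul V E _ _ = None"

fun teval :: "'a set \<Rightarrow> ('a \<times> 'a) set \<Rightarrow> (nat \<Rightarrow> 'a option) \<Rightarrow> bterm \<Rightarrow> 'a option" where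
  "teval V E \<sigma> (Var i) = \<sigma> i"
| "teval V E \<sigma> (Op a b) = gmul V E (teval V E \<sigma> a) (teval V E \<sigma> b)"

definition satisfies_id :: "'a set \<Rightarrow> ('a \<times> 'a) set \<Rightarrow> bterm \<Rightarrow> bterm \<Rightarrow> bool" where
  "satisfies_id V E t t' = (\<forall>\<sigma>. (\<forall>i. \<sigma> i \<in> gcarrier V) \<longrightarrow> teval V E \<sigma> t = teval V E \<sigma> t')"

definition scc_of :: "'a set \<Rightarrow> ('a \<times> 'a) set \<Rightarrow> 'a \<Rightarrow> 'a set" where
  "scc_of V E v = {u \<in> V. (v, u) \<in> E\<^sup>* \<and> (u, v) \<in> E\<^sup>*}"

definition is_scc :: "'a set \<Rightarrow> ('a \<times> 'a) set \<Rightarrow> 'a set \<Rightarrow> bool" where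
  "is_scc V E K = (\<exists>v\<in>V. K = scc_of V E v)"

definition trivial_scc :: "('a \<times> 'a) set \<Rightarrow> 'a set \<Rightarrow> bool" where
  "trivial_scc E K = (\<exists>v. K = {v} \<and> (v, v) \<notin> E)"

definition nontrivial_scc :: "'a set \<Rightarrow> ('a \<times> 'a) set \<Rightarrow> 'a set \<Rightarrow> bool" where
  "nontrivial_scc V E K = (is_scc V E K \<and> \<not> trivial_scc E K)"

definition entryway :: "'a set \<Rightarrow> ('a \<times> 'a) set \<Rightarrow> 'a list \<Rightarrow> 'a set \<Rightarrow> bool" where
  "entryway V E ps K = (ps \<noteq> [] \<and> set ps \<subseteq> V \<and>
      (\<forall>i. i + 1 < length ps \<longrightarrow> (ps ! i, ps ! (i + 1)) \<in> E) \<and>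
      (\<forall>i. i + 1 < length ps \<longrightarrow> trivial_scc E (scc_of V E (ps ! i))) \<and>
      nontrivial_scc V E K \<and> last ps \<in> K)"

(* E_G: maximal entryway length (Sup of empty set = -\<infinity>, unbounded = \<infinity>) *)
definition EG :: "'a set \<Rightarrow> ('a \<times> 'a) set \<Rightarrow> ereal" where
  "EG V E = Sup {ereal (real (length ps - 1)) | ps K. entryway V E ps K}"

end

theory Submission
  imports Defs
begin


fun dep :: "bterm \<Rightarrow> nat \<Rightarrow> nat" where
  "dep (Var i) y = 0"
| "dep (Op a b) y = (if y \<in> set (leaves a) then dep a y else Suc (dep b y))"

lemma leaves_ne: "leaves t \<noteq> []" by (induct t) auto
lemma lmv_hd: "hd (leaves t) = lmv t" by (induct t) (auto simp: leaves_ne)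
lemma lmv_in: "lmv t \<in> set (leaves t)" by (induct t) auto
lemma tedges_sub: "tedges t \<subseteq> set (leaves t) \<times> set (leaves t)"
  using lmv_in by (induct t) fastforce+
lemma dep_lmv: "dep t (lmv t) = 0" using lmv_in by (induct t) auto

lemma dep_edge: "distinct (leaves t) \<Longrightarrow> (i,j) \<in> tedges t \<Longrightarrow> dep t j = Suc (dep t i)"
proof (induct t)
  case (Var x) then show ?case by simp
next
  case (Op a b)
  have d: "distinct (leaves a)" "distinct (leaves b)" "set (leaves a) \<inter> set (leaves b) = {}"
    using Op.prems by auto
  show ?case
  proof -
    { assume "(i,j) \<in> tedges a"
      then have ?thesis using Op d tedges_sub[of a] by auto }
    moreover
    { assume "(i,j) \<in> tedges b"
      then have ?thesis using Op d tedges_sub[of b] by auto }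
    moreover
    { assume "(i,j) = (lmv a, lmv b)"
      then have ?thesis using d lmv_in[of a] lmv_in[of b] dep_lmv[of a] dep_lmv[of b] by auto }
    ultimately show ?thesis using Op.prems by auto
  qed
qed

lemma relpow_mono_aux: "(R::('a\<times>'a) set) \<subseteq> S \<Longrightarrow> (x,y) \<in> R ^^ k \<Longrightarrow> (x,y) \<in> S ^^ k"
proof (induct k arbitrary: y)
  case 0 then show ?case by auto
next
  case (Suc k) then show ?case by (auto elim!: relpow_Suc_E intro: relpow_Suc_I)
qed

lemma dep_path: "y \<in> set (leaves t) \<Longrightarrow> (lmv t, y) \<in> (tedges t) ^^ (dep t y)"
proof (induct t arbitrary: y)
  case (Var x) then show ?case by simp
next
  case (Op a b)
  show ?case
  proof (cases "y \<in> set (leaves a)")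
    case True
    then show ?thesis using Op(1)[OF True] by (auto intro: relpow_mono_aux[rotated])
  next
    case False
    then have yb: "y \<in> set (leaves b)" using Op.prems by auto
    have "(lmv b, y) \<in> tedges (Op a b) ^^ dep b y"
      using Op(2)[OF yb] by (auto intro: relpow_mono_aux[rotated])
    moreover have "(lmv a, lmv b) \<in> tedges (Op a b)" by simp
    ultimately have "(lmv a, y) \<in> tedges (Op a b) ^^ Suc (dep b y)" by (rule relpow_Suc_I2[rotated])
    then show ?thesis using False by simp
  qed
qed

lemma path_dep: "distinct (leaves t) \<Longrightarrow> (lmv t, y) \<in> (tedges t) ^^ k \<Longrightarrow> dep t y = k"
proof (induct k arbitrary: y)
  case 0 then show ?case using dep_lmv by auto
next
  case (Suc k)
  then obtain z where "(lmv t, z) \<in> tedges t ^^ k" "(z, y) \<in> tedges t" by (auto elim: relpow_Suc_E)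
  then show ?case using Suc dep_edge by metis
qed

lemma tdepth_dep: "distinct (leaves t) \<Longrightarrow> y \<in> set (leaves t) \<Longrightarrow> lmv t = 1 \<Longrightarrow> tdepth t y = dep t y"
  unfolding tdepth_def
  by (rule Least_equality) (metis dep_path, metis path_dep order_refl)

lemma dep0: "distinct (leaves t) \<Longrightarrow> y \<in> set (leaves t) \<Longrightarrow> dep t y = 0 \<Longrightarrow> y = lmv t"
  by (induct t) (auto split: if_splits)

lemma teval_some:
  "(\<forall>i\<in>set (leaves t). g i \<in> V) \<Longrightarrow> (\<forall>(i,j)\<in>tedges t. (g i, g j) \<in> E) \<Longrightarrow>
   teval V E (\<lambda>y. Some (g y)) t = Some (g (lmv t))"
  using lmv_in by (induct t) auto

lemma teval_none:
  "teval V E (\<lambda>y. Some (g y)) t \<noteq> None \<Longrightarrow>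
   teval V E (\<lambda>y. Some (g y)) t = Some (g (lmv t)) \<and> (\<forall>(i,j)\<in>tedges t. (g i, g j) \<in> E)"
proof (induct t)
  case (Var x) then show ?case by simp
next
  case (Op a b)
  have na: "teval V E (\<lambda>y. Some (g y)) a \<noteq> None" and nb: "teval V E (\<lambda>y. Some (g y)) b \<noteq> None"
    using Op.prems by (metis gmul.simps(2,3) teval.simps(2) not_None_eq)+
  show ?case using Op(1)[OF na] Op(2)[OF nb] Op.prems by (auto split: if_splits)
qed



lemma len_aux:
  assumes xs: "leaves a @ leaves b = leaves a' @ leaves b'"
    and d: "distinct (leaves a @ leaves b)"
    and dep: "\<forall>y\<in>set (leaves a @ leaves b). dep (Op a b) y = dep (Op a' b') y"
    and lt: "length (leaves a) < length (leaves a')"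
  shows False
proof -
  define xs where "xs = leaves a @ leaves b"
  define p where "p = length (leaves a)"
  define p' where "p' = length (leaves a')"
  have pl: "p' < length xs" using leaves_ne[of b'] xs unfolding xs_def p'_def by simp
  have z: "lmv b' = xs ! p'" using xs leaves_ne[of b'] lmv_hd[of b'] unfolding xs_def p'_def
    by (metis hd_conv_nth nth_append_length_plus add_0_right)
  have y: "lmv b = xs ! p" using leaves_ne[of b] lmv_hd[of b] unfolding xs_def p_def
    by (metis hd_conv_nth nth_append_length_plus add_0_right)
  have zb: "lmv b' \<in> set (leaves b)" unfolding z xs_def
    using pl lt unfolding xs_def p_def p'_def
    by (simp add: nth_append)
  have za: "lmv b' \<notin> set (leaves a)" using zb d by auto
  have za': "lmv b' \<notin> set (leaves a')" using d xs lmv_in[of b'] by (metis distinct_append disjoint_iff)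
  have "dep (Op a' b') (lmv b') = 1" using za' dep_lmv[of b'] by simp
  then have "dep (Op a b) (lmv b') = 1" using dep zb by auto
  then have "dep b (lmv b') = 0" using za by simp
  then have "lmv b' = lmv b" using dep0[of b "lmv b'"] d zb by auto
  then have "xs ! p' = xs ! p" using y z by simp
  moreover have "p < length xs" using pl lt p_def p'_def by simp
  ultimately show False using d pl lt nth_eq_iff_index_eq unfolding xs_def p_def p'_def
    by (metis less_irrefl)
qed

lemma dep_inj: "distinct (leaves t) \<Longrightarrow> leaves t' = leaves t \<Longrightarrow>
   (\<forall>y\<in>set (leaves t). dep t y = dep t' y) \<Longrightarrow> t = t'"
proof (induct t arbitrary: t')
  case (Var i)
  then show ?case
  proof (cases t')
    case (Op a b) then show ?thesis using Var leaves_ne[of a] leaves_ne[of b]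
      by (cases "leaves a"; cases "leaves b") auto
  qed auto
next
  case (Op a b)
  note IH1 = Op(1) and IH2 = Op(2) and prems = Op.prems
  show ?case
  proof (cases t')
    case (Var i) then show ?thesis using prems leaves_ne[of a] leaves_ne[of b]
      by (cases "leaves a"; cases "leaves b") auto
  next
    case (Op a' b')
    note Op2 = this
    have xs: "leaves a @ leaves b = leaves a' @ leaves b'" using prems Op2 by simp
    have dd: "\<forall>y\<in>set (leaves a @ leaves b). dep (Op a b) y = dep (Op a' b') y"
      using prems Op2 by simp
    have d: "distinct (leaves a @ leaves b)" using prems by simp
    have "length (leaves a) = length (leaves a')"
    proof (rule ccontr)
      assume "length (leaves a) \<noteq> length (leaves a')"
      then consider "length (leaves a) < length (leaves a')" | "length (leaves a') < length (leaves a)" by linarith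
      then show False
      proof cases
        case 1 then show ?thesis using len_aux[OF xs d dd] by simp
      next
        case 2 then show ?thesis using len_aux[OF xs[symmetric]] d dd xs by simp
      qed
    qed
    then have la: "leaves a' = leaves a" and lb: "leaves b' = leaves b" using xs by auto
    have "a = a'"
    proof (rule IH1[of a'])
      show "distinct (leaves a)" using d by simp
      show "leaves a' = leaves a" by (rule la)
      show "\<forall>y\<in>set (leaves a). dep a y = dep a' y"
      proof
        fix y assume ya: "y \<in> set (leaves a)"
        then show "dep a y = dep a' y" using dd ya la by force
      qed
    qed
    moreover have "b = b'"
    proof (rule IH2[of b'])
      show "distinct (leaves b)" using d by simp
      show "leaves b' = leaves b" by (rule lb)
      show "\<forall>y\<in>set (leaves b). dep b y = dep b' y"
      proof
        fix y assume yb: "y \<in> set (leaves b)"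
        then have "y \<notin> set (leaves a)" using d by auto
        moreover have "dep (Op a b) y = dep (Op a' b') y" using dd yb by simp
        ultimately show "dep b y = dep b' y" using la by simp
      qed
    qed
    ultimately show ?thesis using Op2 by simp
  qed
qed



lemma greatest_aux:
  fixes D D' :: "nat \<Rightarrow> nat" and A :: "nat set" and Q :: "int \<Rightarrow> bool"
  assumes Qdef: "Q = (\<lambda>m. \<forall>x\<in>A. (int (D x) \<le> m \<or> int (D' x) \<le> m) \<longrightarrow> D x = D' x)"
    and ex: "\<exists>x\<in>A. D x \<noteq> D' x" and z: "\<forall>x\<in>A. D x = 0 \<longleftrightarrow> D' x = 0"
  shows "Q (GREATEST m. Q m) \<and> \<not> Q ((GREATEST m. Q m) + 1) \<and> (GREATEST m. Q m) \<ge> 0"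
proof -
  obtain x0 where x0: "x0 \<in> A" "D x0 \<noteq> D' x0" using ex by auto
  have bound: "m < int (D x0)" if "Q m" for m
    using that x0 unfolding Qdef by force
  define N where "N = {k::nat. Q (int k)}"
  have fin: "finite N" using bound unfolding N_def
    by (metis (mono_tags, lifting) finite_nat_set_iff_bounded mem_Collect_eq of_nat_less_iff)
  have N0: "0 \<in> N" using z unfolding N_def Qdef by auto
  define M where "M = Max N"
  have MN: "M \<in> N" using fin N0 unfolding M_def using Max_in by blast
  have QM: "Q (int M)" using MN unfolding N_def by simp
  have le: "m \<le> int M" if "Q m" for m
  proof (cases "m < 0")
    case True then show ?thesis by simp
  next
    case False
    then have "nat m \<in> N" using that unfolding N_def by simp
    then have "nat m \<le> M" using fin unfolding M_def by simp
    then show ?thesis using False by simp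
  qed
  have G: "(GREATEST m. Q m) = int M" using QM le by (rule Greatest_equality[where P=Q])
  have "\<not> Q (int M + 1)"
  proof
    assume "Q (int M + 1)"
    then have "Suc M \<in> N" unfolding N_def by (simp add: add.commute)
    then have "Suc M \<le> M" using fin unfolding M_def by simp
    then show False by simp
  qed
  then show ?thesis using G QM by simp
qed

lemma walk_exists:
  assumes EV: "E \<subseteq> V \<times> V" and ent: "entryway V E ps K"
  shows "\<exists>w. (\<forall>i. (w i, w (Suc i)) \<in> E) \<and> (\<forall>i<length ps. w i = ps ! i)"
proof -
  from ent have ne: "ps \<noteq> []" and pe: "\<forall>i. i+1 < length ps \<longrightarrow> (ps!i, ps!(i+1)) \<in> E"
    and nt: "nontrivial_scc V E K" and lK: "last ps \<in> K" unfolding entryway_def by auto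
  from nt obtain v where v: "v \<in> V" "K = scc_of V E v" and ntK: "\<not> trivial_scc E K"
    unfolding nontrivial_scc_def is_scc_def by auto
  have step: "\<exists>u'. u' \<in> K \<and> (u,u') \<in> E" if u: "u \<in> K" for u
  proof (cases "(u,u) \<in> E")
    case True then show ?thesis using u by auto
  next
    case False
    then have "K \<noteq> {u}" using ntK unfolding trivial_scc_def by auto
    then obtain z where z: "z \<in> K" "z \<noteq> u" using u by auto
    have uv: "(u,v) \<in> E\<^sup>*" and vu: "(v,u) \<in> E\<^sup>*" using u v unfolding scc_of_def by auto
    have zv: "(z,v) \<in> E\<^sup>*" and vz: "(v,z) \<in> E\<^sup>*" using z v unfolding scc_of_def by auto
    have "(u,z) \<in> E\<^sup>*" using uv vz by (rule rtrancl_trans)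
    then have "(u,z) \<in> E\<^sup>+" using z(2) by (auto simp: rtrancl_eq_or_trancl)
    then obtain u1 where u1: "(u,u1) \<in> E" "(u1,z) \<in> E\<^sup>*" by (auto dest: tranclD)
    have "(v,u1) \<in> E\<^sup>*" using vu u1(1) by (rule rtrancl_into_rtrancl)
    moreover have "(u1,v) \<in> E\<^sup>*" using u1(2) zv by (rule rtrancl_trans)
    moreover have "u1 \<in> V" using u1(1) EV by auto
    ultimately have "u1 \<in> K" using v unfolding scc_of_def by auto
    then show ?thesis using u1 by auto
  qed
  define nx where "nx u = (SOME u'. u' \<in> K \<and> (u,u') \<in> E)" for u
  have nx: "nx u \<in> K \<and> (u, nx u) \<in> E" if "u \<in> K" for u
    using someI_ex[OF step[OF that]] unfolding nx_def by simp
  define w' where "w' = rec_nat (last ps) (\<lambda>_ u. nx u)"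
  have w'0: "w' 0 = last ps" and w'S: "w' (Suc i) = nx (w' i)" for i unfolding w'_def by simp_all
  have w'K: "w' i \<in> K" for i
    by (induct i) (use lK nx w'0 w'S in auto)
  define l where "l = length ps - 1"
  have lastl: "last ps = ps ! l" using ne unfolding l_def by (simp add: last_conv_nth)
  define w where "w i = (if i < l then ps ! i else w' (i - l))" for i
  show ?thesis
  proof (intro exI conjI allI impI)
    fix i
    show "(w i, w (Suc i)) \<in> E"
    proof (cases "Suc i < l")
      case True then show ?thesis using pe unfolding w_def l_def by auto
    next
      case False
      show ?thesis
      proof (cases "Suc i = l")
        case True
        then have "w i = ps ! i" "w (Suc i) = ps ! (i+1)" unfolding w_def using w'0 lastl by auto
        moreover have "i + 1 < length ps" using True unfolding l_def by simp
        ultimately show ?thesis using pe by auto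
      next
        case False
        then have "i \<ge> l" using \<open>\<not> Suc i < l\<close> by simp
        then have "w i = w' (i - l)" "w (Suc i) = w' (Suc (i - l))" unfolding w_def
          by (auto simp: Suc_diff_le)
        then show ?thesis using nx w'K w'S by auto
      qed
    qed
  next
    fix i assume "i < length ps"
    then have "i < l \<or> i = l" unfolding l_def by auto
    then show "w i = ps ! i" unfolding w_def using w'0 lastl by auto
  qed
qed



lemma core:
  assumes EV: "E \<subseteq> V \<times> V"
  and dt: "distinct (leaves t)" "distinct (leaves t')"
  and sat: "satisfies_id V E t t'"
  and x: "x \<in> set (leaves t')" "dep t x = Suc L" "Suc (Suc L) \<le> dep t' x"
  and PL: "\<forall>y\<in>set (leaves t'). dep t' y \<le> L \<longrightarrow> dep t y = dep t' y"
  and ent: "entryway V E ps K" and len: "L + 3 \<le> length ps"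
  shows False
proof -
  obtain w where wE: "\<forall>i. (w i, w (Suc i)) \<in> E" and wps: "\<forall>i<length ps. w i = ps ! i"
    using walk_exists[OF EV ent] by blast
  have wV: "w i \<in> V" for i using wE EV by blast
  have star: "(w i, w (i + k)) \<in> E\<^sup>*" for i k
  proof (induct k)
    case 0 then show ?case by simp
  next
    case (Suc k) then show ?case using wE[rule_format, of "i+k"] by (simp add: rtrancl_into_rtrancl)
  qed
  have plus: "(w i, w j) \<in> E\<^sup>+" if "i < j" for i j
  proof -
    have "(w (Suc i), w (Suc i + (j - Suc i))) \<in> E\<^sup>*" by (rule star)
    then have "(w (Suc i), w j) \<in> E\<^sup>*" using that by simp
    then show ?thesis using wE by (meson rtrancl_into_trancl2)
  qed
  have Y: "(w a, w a) \<notin> E\<^sup>+" if a: "a + 1 < length ps" for a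
  proof
    assume c: "(w a, w a) \<in> E\<^sup>+"
    have wa: "w a = ps ! a" using wps a by simp
    have "trivial_scc E (scc_of V E (ps ! a))" using ent a unfolding entryway_def by blast
    then obtain z where z0: "scc_of V E (ps ! a) = {z}" "(z,z) \<notin> E" unfolding trivial_scc_def by auto
    then have z: "scc_of V E (w a) = {z}" "(z,z) \<notin> E" using wa by auto
    from c obtain u where u: "(w a, u) \<in> E" "(u, w a) \<in> E\<^sup>*" by (auto dest: tranclD)
    have "u \<in> scc_of V E (w a)" using u EV unfolding scc_of_def by auto
    moreover have "w a \<in> scc_of V E (w a)" using wV unfolding scc_of_def by auto
    ultimately have "u = w a" using z(1) by auto
    then show False using u(1) z by (metis \<open>w a \<in> scc_of V E (w a)\<close> singletonD)
  qed
  define g where "g y = w (dep t y)" for y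
  have "teval V E (\<lambda>y. Some (g y)) t = Some (g (lmv t))"
  proof (rule teval_some)
    show "\<forall>i\<in>set (leaves t). g i \<in> V" using wV unfolding g_def by simp
    show "\<forall>(i, j)\<in>tedges t. (g i, g j) \<in> E"
    proof (intro ballI, clarify)
      fix i j assume "(i,j) \<in> tedges t"
      then have "dep t j = Suc (dep t i)" by (rule dep_edge[OF dt(1)])
      then show "(g i, g j) \<in> E" unfolding g_def using wE by simp
    qed
  qed
  moreover have gc: "\<forall>i. (\<lambda>y. Some (g y)) i \<in> gcarrier V" using wV unfolding gcarrier_def g_def by auto
  have "teval V E (\<lambda>y. Some (g y)) t = teval V E (\<lambda>y. Some (g y)) t'"
    using sat[unfolded satisfies_id_def, rule_format, of "\<lambda>y. Some (g y)"] gc by simp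
  ultimately have "teval V E (\<lambda>y. Some (g y)) t' \<noteq> None" by simp
  then have Et': "\<forall>(i,j)\<in>tedges t'. (g i, g j) \<in> E" by (rule conjunct2[OF teval_none])
  define e where "e = dep t' x"
  have "(lmv t', x) \<in> (tedges t') ^^ e" unfolding e_def by (rule dep_path[OF x(1)])
  then obtain f where f0: "f 0 = lmv t'" and fe: "f e = x" and fE: "\<forall>i<e. (f i, f (Suc i)) \<in> tedges t'"
    unfolding relpow_fun_conv by blast
  have df: "i \<le> e \<Longrightarrow> dep t' (f i) = i" for i
  proof (induct i)
    case 0 then show ?case using f0 dep_lmv by simp
  next
    case (Suc i)
    then have "(f i, f (Suc i)) \<in> tedges t'" using fE by simp
    then have "dep t' (f (Suc i)) = Suc (dep t' (f i))" by (rule dep_edge[OF dt(2)])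
    then show ?case using Suc by simp
  qed
  have Le: "L < e" using x(3) unfolding e_def by simp
  have "(f L, f (Suc L)) \<in> tedges t'" using fE Le by simp
  then have fin: "f L \<in> set (leaves t')" using tedges_sub[of t'] by auto
  have dL: "dep t (f L) = L" using PL fin df[of L] Le by simp
  define d where "d j = dep t (f j)" for j
  have dE: "(w (d j), w (d (Suc j))) \<in> E" if "j < e" for j
  proof -
    have "(f j, f (Suc j)) \<in> tedges t'" using fE that by simp
    then have "(g (f j), g (f (Suc j))) \<in> E" using Et' by auto
    then show ?thesis unfolding d_def g_def .
  qed
  have reach: "(w (d j), w (d e)) \<in> E\<^sup>*" if "j + k = e" for j k
    using that
  proof (induct k arbitrary: j)
    case 0 then show ?case by simp
  next
    case (Suc k)
    have "(w (d (Suc j)), w (d e)) \<in> E\<^sup>*" using Suc by simp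
    moreover have "(w (d j), w (d (Suc j))) \<in> E" using dE Suc by simp
    ultimately show ?case by (meson converse_rtrancl_into_rtrancl)
  qed
  have de: "d e = Suc L" unfolding d_def using fe x(2) by simp
  have main: "L + k \<le> e \<Longrightarrow> L + k \<le> d (L + k)" for k
  proof (induct k)
    case 0 then show ?case using dL d_def by simp
  next
    case (Suc k)
    define a where "a = d (L + k)"
    define b where "b = d (Suc (L + k))"
    have IH: "L + k \<le> a" using Suc a_def by simp
    have ab: "(w a, w b) \<in> E" using dE[of "L+k"] Suc.prems unfolding a_def b_def by simp
    show ?case
    proof (rule ccontr)
      assume "\<not> ?case"
      then have ba: "b \<le> a" using IH b_def by simp
      show False
      proof (cases "a + 1 < length ps")
        case True
        have "(w b, w (b + (a - b))) \<in> E\<^sup>*" by (rule star)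
        then have "(w b, w a) \<in> E\<^sup>*" using ba by simp
        then have "(w b, w b) \<in> E\<^sup>+" using ab by (meson rtrancl_into_trancl1)
        then show False using Y[of b] True ba by simp
      next
        case False
        then have "Suc L < a" using len by simp
        then have "(w (Suc L), w a) \<in> E\<^sup>+" by (rule plus)
        moreover have "(w a, w (d e)) \<in> E\<^sup>*" unfolding a_def
          using reach[of "L+k" "e - (L+k)"] Suc.prems by simp
        ultimately have "(w (Suc L), w (Suc L)) \<in> E\<^sup>+" using de by (simp add: trancl_rtrancl_trancl)
        then show False using Y[of "Suc L"] len by simp
      qed
    qed
  qed
  have "e \<le> d e" using main[of "e - L"] Le by simp
  then show False using de x(3) unfolding e_def by simp
qed



theorem lemma6p7:
  fixes V :: "'a set" and E :: "('a \<times> 'a) set" and t t' :: bterm and n :: nat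
  assumes "E \<subseteq> V \<times> V"
    and "t \<in> Bn n" and "t' \<in> Bn n" and "t \<noteq> t'"
    and "satisfies_id V E t t'"
  shows "EG V E \<le> ereal (real_of_int (Ltt n t t' + 1))"
proof -
  note EV = assms(1) and sat = assms(5)
  have lt: "leaves t = [1..<n+1]" and lt': "leaves t' = [1..<n+1]" using assms(2,3) unfolding Bn_def by auto
  have n1: "n \<ge> 1" using leaves_ne[of t] lt by (cases n) auto
  have dt: "distinct (leaves t)" and dt': "distinct (leaves t')" using lt lt' by simp_all
  have st: "set (leaves t) = {1..n}" and st': "set (leaves t') = {1..n}" using lt lt' by auto
  have r: "lmv t = 1" and r': "lmv t' = 1" using lmv_hd[of t] lmv_hd[of t'] lt lt' n1 by (simp_all del: upt_Suc add: upt_conv_Cons)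
  have td: "\<forall>y\<in>{1..n}. tdepth t y = dep t y" using tdepth_dep[OF dt _ r] st by auto
  have td': "\<forall>y\<in>{1..n}. tdepth t' y = dep t' y" using tdepth_dep[OF dt' _ r'] st' by auto
  have ex: "\<exists>x\<in>{1..n}. tdepth t x \<noteq> tdepth t' x"
  proof (rule ccontr)
    assume "\<not> ?thesis"
    then have "\<forall>y\<in>set (leaves t). dep t y = dep t' y" using td td' st by auto
    then have "t = t'" using dep_inj[OF dt] lt lt' by auto
    then show False using assms(4) by simp
  qed
  have z: "\<forall>x\<in>{1..n}. tdepth t x = 0 \<longleftrightarrow> tdepth t' x = 0"
  proof
    fix x assume x: "x \<in> {1..n}"
    have "dep t x = 0 \<longleftrightarrow> x = 1" using dep0[OF dt, of x] dep_lmv[of t] r st x by auto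
    moreover have "dep t' x = 0 \<longleftrightarrow> x = 1" using dep0[OF dt', of x] dep_lmv[of t'] r' st' x by auto
    ultimately show "tdepth t x = 0 \<longleftrightarrow> tdepth t' x = 0" using td td' x by simp
  qed
  define Q where "Q = (\<lambda>m::int. \<forall>x\<in>{1..n}. (int (tdepth t x) \<le> m \<or> int (tdepth t' x) \<le> m) \<longrightarrow> tdepth t x = tdepth t' x)"
  have LQ: "Ltt n t t' = (GREATEST m. Q m)" unfolding Ltt_def Q_def by simp
  have G: "Q (Ltt n t t') \<and> \<not> Q (Ltt n t t' + 1) \<and> Ltt n t t' \<ge> 0"
    unfolding LQ by (rule greatest_aux[OF Q_def ex z])
  obtain Ln where Ln: "Ltt n t t' = int Ln" using G by (metis nonneg_int_cases)
  have QLn: "Q (int Ln)" and nQ: "\<not> Q (int Ln + 1)" using G Ln by simp_all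
  have QL: "\<forall>x\<in>{1..n}. (dep t x \<le> Ln \<or> dep t' x \<le> Ln) \<longrightarrow> dep t x = dep t' x"
  proof (intro ballI impI)
    fix x assume x: "x \<in> {1..n}" and h: "dep t x \<le> Ln \<or> dep t' x \<le> Ln"
    have "(int (tdepth t x) \<le> int Ln \<or> int (tdepth t' x) \<le> int Ln) \<longrightarrow> tdepth t x = tdepth t' x"
      using QLn[unfolded Q_def] x by blast
    then show "dep t x = dep t' x" using h td td' x by auto
  qed
  have "\<exists>x\<in>{1..n}. (int (tdepth t x) \<le> int Ln + 1 \<or> int (tdepth t' x) \<le> int Ln + 1) \<and> tdepth t x \<noteq> tdepth t' x"
    using nQ unfolding Q_def by blast
  then obtain x where x0: "x \<in> {1..n}" "int (tdepth t x) \<le> int Ln + 1 \<or> int (tdepth t' x) \<le> int Ln + 1"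
     "tdepth t x \<noteq> tdepth t' x" by blast
  have x: "x \<in> {1..n}" "dep t x \<le> Suc Ln \<or> dep t' x \<le> Suc Ln" "dep t x \<noteq> dep t' x"
    using x0 td td' by auto
  have gt: "Ln < dep t x" "Ln < dep t' x" using QL x by (meson not_le)+
  have sat': "satisfies_id V E t' t"
    unfolding satisfies_id_def
  proof (intro allI impI)
    fix \<sigma> :: "nat \<Rightarrow> 'a option" assume "\<forall>i. \<sigma> i \<in> gcarrier V"
    then have "teval V E \<sigma> t = teval V E \<sigma> t'" using sat[unfolded satisfies_id_def, rule_format, of \<sigma>] by simp
    then show "teval V E \<sigma> t' = teval V E \<sigma> t" by simp
  qed
  show ?thesis unfolding EG_def
  proof (rule Sup_least)
    fix y assume "y \<in> {ereal (real (length ps - 1)) | ps K. entryway V E ps K}"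
    then obtain ps K where y: "y = ereal (real (length ps - 1))" and ent: "entryway V E ps K" by blast
    have "length ps \<le> Ln + 2"
    proof (rule ccontr)
      assume "\<not> ?thesis"
      then have len: "Ln + 3 \<le> length ps" by simp
      show False
      proof (cases "dep t x = Suc Ln")
        case True
        have h1: "Suc (Suc Ln) \<le> dep t' x" using x gt True by simp
        have xin: "x \<in> set (leaves t')" using x(1) st' by simp
        have PL: "\<forall>y\<in>set (leaves t'). dep t' y \<le> Ln \<longrightarrow> dep t y = dep t' y" 
        proof
          fix y assume "y \<in> set (leaves t')"
          then have "y \<in> {1..n}" using st' by simp
          then show "dep t' y \<le> Ln \<longrightarrow> dep t y = dep t' y" using QL by blast
        qed
        show False by (rule core[OF EV dt dt' sat xin True h1 PL ent len])
      next
        case False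
        then have a: "dep t' x = Suc Ln" "Suc (Suc Ln) \<le> dep t x" using x gt by auto
        have xin: "x \<in> set (leaves t)" using x(1) st by simp
        have PL: "\<forall>y\<in>set (leaves t). dep t y \<le> Ln \<longrightarrow> dep t' y = dep t y" 
        proof
          fix y assume "y \<in> set (leaves t)"
          then have "y \<in> {1..n}" using st by simp
          then show "dep t y \<le> Ln \<longrightarrow> dep t' y = dep t y" using QL by metis
        qed
        show False by (rule core[OF EV dt' dt sat' xin a(1) a(2) PL ent len])
      qed
    qed
    then show "y \<le> ereal (real_of_int (Ltt n t t' + 1))" unfolding y Ln by simp
  qed
qed


end
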